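(* Let $d\in\mathbb{Z}^+$ and let $\Pi=\langle Q,Q_0,Q_1,q_{init},\delta\rangle$ be a 1-aware population protocol computing the predicate $R(n)=\mathbb{I}\{n\ge d\}$. For $q\in Q$ let $f(q)$ be the minimal $n\in\mathbb{Z}^+$ such that $q$ can occur from $I_n$, and $f(q)=+\infty$ if there is no such $n$. If $a<b$ are two consecutive elements of the set $f(Q)\cap\mathbb{Z}^+$ (i.e. $a,b\in f(Q)\cap\mathbb{Z}^+$ and no element of $f(Q)$ lies strictly between them), then $b\le 2a$.
   Context: A population protocol is a tuple $\Pi=\langle Q,Q_0,Q_1,q_{init},\delta\rangle$ where $Q$ is a finite set of states, $Q=Q_0\sqcup Q_1$ (disjoint union), $q_{init}\in Q$ is the initial state, and $\delta\colon Q^2\to 2^{Q^2}\setminus\{\varnothing\}$ is the transition function. For $n\in\mathbb{Z}^+$, an $n$-size configuration is a function $C\colon[n]\to Q$, where $[n]=\{1,\dots,n\}$; the initial configuration $I_n$ maps every element to $q_{init}$. A pair $(C_1,C_2)$ of $n$-size configurations is a transition if there are distinct $i,j\in[n]$ with $(C_2(i),C_2(j))\in\delta(C_1(i),C_1(j))$ and $C_2(k)=C_1(k)$ for all $k\ne i,j$ (the pair $(i,j)$ is ordered). $D$ is reachable from $C$ if there is a finite sequence $C=C_1,\dots,C_k=D$ ($k\ge1$) of configurations with each $(C_i,C_{i+1})$ a transition. A state $q$ can occur from a configuration $C\colon[n]\to Q$ if some configuration $D$ reachable from $C$ has $D(i)=q$ for some $i\in[n]$. An execution is an infinite sequence $(C_i)_{i\ge1}$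 with $C_1=I_n$ for some $n$ and each $(C_i,C_{i+1})$ a transition; it is fair if whenever a configuration $C$ occurs infinitely often in it and $D$ is reachable from $C$, then $D$ also occurs infinitely often. $\Pi$ is a 1-aware population protocol computing $R\colon\mathbb{Z}^+\to\{0,1\}$ if for every $n\in\mathbb{Z}^+$: if $R(n)=0$ then every configuration $C$ reachable from $I_n$ satisfies $C([n])\subseteq Q_0$; and if $R(n)=1$ then for every fair execution $(C_i)_{i\ge1}$ with $C_1=I_n$ there is $i_0$ such that $C_i([n])\subseteq Q_1$ for all $i\ge i_0$. *)

theory Defs
  imports Main "HOL-Library.Extended_Nat"
begin

text \<open>Agents are indexed by naturals; an n-size
  configuration is a function nat \<Rightarrow> 'q whose relevant values are those on {1..n}
  (values outside {1..n} are never changed by transitions and equal q_init for all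
  configurations reachable from the initial one).\<close>

definition pop_protocol ::
  "'q set \<Rightarrow> 'q set \<Rightarrow> 'q set \<Rightarrow> 'q \<Rightarrow> ('q \<Rightarrow> 'q \<Rightarrow> ('q \<times> 'q) set) \<Rightarrow> bool" where
  "pop_protocol Q Q0 Q1 qi \<delta> \<longleftrightarrow>
     finite Q \<and> Q = Q0 \<union> Q1 \<and> Q0 \<inter> Q1 = {} \<and> qi \<in> Q \<and>
     (\<forall>p\<in>Q. \<forall>q\<in>Q. \<delta> p q \<noteq> {} \<and> \<delta> p q \<subseteq> Q \<times> Q)"

definition init_config :: "'q \<Rightarrow> nat \<Rightarrow> 'q" where
  "init_config qi = (\<lambda>k. qi)"

definition pp_step ::
  "('q \<Rightarrow> 'q \<Rightarrow> ('q \<times> 'q) set) \<Rightarrow> nat \<Rightarrow> (nat \<Rightarrow> 'q) \<Rightarrow> (nat \<Rightarrow> 'q) \<Rightarrow> bool" where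
  "pp_step \<delta> n C1 C2 \<longleftrightarrow>
     (\<exists>i\<in>{1..n}. \<exists>j\<in>{1..n}. i \<noteq> j \<and> (C2 i, C2 j) \<in> \<delta> (C1 i) (C1 j) \<and>
        (\<forall>k. k \<noteq> i \<and> k \<noteq> j \<longrightarrow> C2 k = C1 k))"

definition pp_reach ::
  "('q \<Rightarrow> 'q \<Rightarrow> ('q \<times> 'q) set) \<Rightarrow> nat \<Rightarrow> (nat \<Rightarrow> 'q) \<Rightarrow> (nat \<Rightarrow> 'q) \<Rightarrow> bool" where
  "pp_reach \<delta> n = (pp_step \<delta> n)\<^sup>*\<^sup>*"

definition can_occur ::
  "('q \<Rightarrow> 'q \<Rightarrow> ('q \<times> 'q) set) \<Rightarrow> 'q \<Rightarrow> nat \<Rightarrow> 'q \<Rightarrow> bool" where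
  "can_occur \<delta> qi n q \<longleftrightarrow>
     (\<exists>D. pp_reach \<delta> n (init_config qi) D \<and> (\<exists>i\<in>{1..n}. D i = q))"

definition pp_execution ::
  "('q \<Rightarrow> 'q \<Rightarrow> ('q \<times> 'q) set) \<Rightarrow> 'q \<Rightarrow> nat \<Rightarrow> (nat \<Rightarrow> nat \<Rightarrow> 'q) \<Rightarrow> bool" where
  "pp_execution \<delta> qi n E \<longleftrightarrow>
     E 0 = init_config qi \<and> (\<forall>i. pp_step \<delta> n (E i) (E (Suc i)))"

definition pp_fair ::
  "('q \<Rightarrow> 'q \<Rightarrow> ('q \<times> 'q) set) \<Rightarrow> nat \<Rightarrow> (nat \<Rightarrow> nat \<Rightarrow> 'q) \<Rightarrow> bool" where
  "pp_fair \<delta> n E \<longleftrightarrow>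
     (\<forall>C D. infinite {i. E i = C} \<and> pp_reach \<delta> n C D \<longrightarrow> infinite {i. E i = D})"

definition aware1_computes ::
  "'q set \<Rightarrow> 'q set \<Rightarrow> 'q set \<Rightarrow> 'q \<Rightarrow> ('q \<Rightarrow> 'q \<Rightarrow> ('q \<times> 'q) set) \<Rightarrow> (nat \<Rightarrow> bool) \<Rightarrow> bool" where
  "aware1_computes Q Q0 Q1 qi \<delta> R \<longleftrightarrow>
     pop_protocol Q Q0 Q1 qi \<delta> \<and>
     (\<forall>n\<ge>1.
        (\<not> R n \<longrightarrow> (\<forall>C. pp_reach \<delta> n (init_config qi) C \<longrightarrow> C ` {1..n} \<subseteq> Q0)) \<and>
        (R n \<longrightarrow> (\<forall>E. pp_execution \<delta> qi n E \<and> pp_fair \<delta> n E \<longrightarrow>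
                      (\<exists>i0. \<forall>i\<ge>i0. E i ` {1..n} \<subseteq> Q1))))"

definition first_occ ::
  "('q \<Rightarrow> 'q \<Rightarrow> ('q \<times> 'q) set) \<Rightarrow> 'q \<Rightarrow> 'q \<Rightarrow> enat" where
  "first_occ \<delta> qi q =
     (if \<exists>n\<ge>1. can_occur \<delta> qi n q
      then enat (LEAST n. n \<ge> 1 \<and> can_occur \<delta> qi n q) else \<infinity>)"

end

theory Submission
  imports Defs
begin

lemma fo_le:
  assumes "can_occur \<delta> qi N s" "N \<ge> 1"
  shows "first_occ \<delta> qi s \<le> enat N"
proof -
  have "(LEAST n. n \<ge> 1 \<and> can_occur \<delta> qi n s) \<le> N"
    by (rule Least_le) (use assms in auto)
  then show ?thesis using assms unfolding first_occ_def by auto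
qed

lemma fo_fin:
  assumes "first_occ \<delta> qi p \<le> enat a"
  shows "\<exists>n. 1 \<le> n \<and> n \<le> a \<and> can_occur \<delta> qi n p"
proof -
  have ex: "\<exists>n\<ge>1. can_occur \<delta> qi n p"
    using assms unfolding first_occ_def by (auto split: if_splits)
  let ?L = "LEAST n. n \<ge> 1 \<and> can_occur \<delta> qi n p"
  have "?L \<ge> 1 \<and> can_occur \<delta> qi ?L p" using ex by (metis (mono_tags, lifting) LeastI)
  moreover have "?L \<le> a" using assms ex unfolding first_occ_def by auto
  ultimately show ?thesis by blast
qed

lemma fo_ge1:
  assumes "first_occ \<delta> qi q = enat a"
  shows "a \<ge> 1"
proof -
  have ex: "\<exists>n\<ge>1. can_occur \<delta> qi n q"
    using assms unfolding first_occ_def by (auto split: if_splits)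
  let ?L = "LEAST n. n \<ge> 1 \<and> can_occur \<delta> qi n q"
  have "?L \<ge> 1" using ex by (metis (mono_tags, lifting) LeastI)
  moreover have "?L = a" using assms ex unfolding first_occ_def by auto
  ultimately show ?thesis by simp
qed

lemma step_mono: "pp_step \<delta> n C D \<Longrightarrow> n \<le> N \<Longrightarrow> pp_step \<delta> N C D"
  unfolding pp_step_def by (meson atLeastAtMost_iff le_trans)

lemma reach_mono: "pp_reach \<delta> n C D \<Longrightarrow> n \<le> N \<Longrightarrow> pp_reach \<delta> N C D"
  unfolding pp_reach_def
  by (induction rule: rtranclp_induct) (auto intro: rtranclp.rtrancl_into_rtrancl step_mono)

lemma step_outside: "pp_step \<delta> n C D \<Longrightarrow> k \<notin> {1..n} \<Longrightarrow> D k = C k"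
  unfolding pp_step_def by metis

lemma reach_outside: "pp_reach \<delta> n C D \<Longrightarrow> k \<notin> {1..n} \<Longrightarrow> D k = C k"
  unfolding pp_reach_def
proof (induction rule: rtranclp_induct)
  case (step y z)
  then show ?case using step_outside[of \<delta> n y z k] by simp
qed simp

definition sh :: "nat \<Rightarrow> (nat \<Rightarrow> 'q) \<Rightarrow> (nat \<Rightarrow> 'q) \<Rightarrow> nat \<Rightarrow> 'q" where
  "sh n P C = (\<lambda>k. if k \<le> n then P k else C (k - n))"

lemma step_sh: "pp_step \<delta> m C D \<Longrightarrow> pp_step \<delta> (n+m) (sh n P C) (sh n P D)"
proof -
  assume "pp_step \<delta> m C D"
  then obtain i j where ij: "i \<in> {1..m}" "j \<in> {1..m}" "i \<noteq> j" "(D i, D j) \<in> \<delta> (C i) (C j)"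
    "\<forall>k. k \<noteq> i \<and> k \<noteq> j \<longrightarrow> D k = C k" unfolding pp_step_def by blast
  show ?thesis unfolding pp_step_def
  proof (intro bexI conjI)
    show "i + n \<noteq> j + n" using ij by simp
    show "(sh n P D (i+n), sh n P D (j+n)) \<in> \<delta> (sh n P C (i+n)) (sh n P C (j+n))"
      using ij by (simp add: sh_def)
    show "\<forall>k. k \<noteq> i + n \<and> k \<noteq> j + n \<longrightarrow> sh n P D k = sh n P C k"
    proof (intro allI impI)
      fix k assume k: "k \<noteq> i + n \<and> k \<noteq> j + n"
      show "sh n P D k = sh n P C k"
      proof (cases "k \<le> n")
        case False
        then have "k - n \<noteq> i" "k - n \<noteq> j" using k by auto
        then show ?thesis using ij(5) False by (simp add: sh_def)
      qed (simp add: sh_def)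
    qed
  qed (use ij in auto)
qed

lemma reach_sh: "pp_reach \<delta> m C D \<Longrightarrow> pp_reach \<delta> (n+m) (sh n P C) (sh n P D)"
  unfolding pp_reach_def
  by (induction rule: rtranclp_induct) (auto intro: rtranclp.rtrancl_into_rtrancl step_sh)

lemma combine:
  assumes "can_occur \<delta> qi n1 p1" "can_occur \<delta> qi n2 p2" "(x, y) \<in> \<delta> p1 p2"
  shows "can_occur \<delta> qi (n1+n2) x \<and> can_occur \<delta> qi (n1+n2) y"
proof -
  obtain D i where D: "pp_reach \<delta> n1 (init_config qi) D" "i \<in> {1..n1}" "D i = p1"
    using assms(1) unfolding can_occur_def by blast
  obtain D' j where D': "pp_reach \<delta> n2 (init_config qi) D'" "j \<in> {1..n2}" "D' j = p2"
    using assms(2) unfolding can_occur_def by blast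
  have r1: "pp_reach \<delta> (n1+n2) (init_config qi) D" using reach_mono[OF D(1)] by simp
  have eq: "sh n1 D (init_config qi) = D"
  proof
    fix k show "sh n1 D (init_config qi) k = D k"
      using reach_outside[OF D(1), of k] by (auto simp: sh_def init_config_def)
  qed
  have r2: "pp_reach \<delta> (n1+n2) D (sh n1 D D')" using reach_sh[OF D'(1), of n1 D] eq by simp
  define E where "E = sh n1 D D'"
  have Ei: "E i = p1" and Ej: "E (j + n1) = p2" using D D' by (auto simp: E_def sh_def)
  define F where "F = (E(i := x))(j + n1 := y)"
  have ne: "i \<noteq> j + n1" using D D' by auto
  have st: "pp_step \<delta> (n1+n2) E F" unfolding pp_step_def
  proof (intro bexI conjI)
    show "(F i, F (j+n1)) \<in> \<delta> (E i) (E (j+n1))" using ne Ei Ej assms(3) by (simp add: F_def)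
  qed (use ne D D' in \<open>auto simp: F_def\<close>)
  have rF: "pp_reach \<delta> (n1+n2) (init_config qi) F"
    using r1 r2 st unfolding pp_reach_def E_def by (meson rtranclp.rtrancl_into_rtrancl rtranclp_trans)
  have "F i = x" "F (j+n1) = y" using ne by (auto simp: F_def)
  moreover have "i \<in> {1..n1+n2}" "j + n1 \<in> {1..n1+n2}" using D D' by auto
  ultimately show ?thesis using rF unfolding can_occur_def by blast
qed

theorem lemma1:
  fixes Q Q0 Q1 :: "'q set" and qi :: 'q and \<delta> :: "'q \<Rightarrow> 'q \<Rightarrow> ('q \<times> 'q) set"
    and d a b :: nat
  assumes "d \<ge> 1"
    and "aware1_computes Q Q0 Q1 qi \<delta> (\<lambda>n. n \<ge> d)"
    and "enat a \<in> first_occ \<delta> qi ` Q" and "enat b \<in> first_occ \<delta> qi ` Q"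
    and "a < b"
    and "\<not> (\<exists>q\<in>Q. enat a < first_occ \<delta> qi q \<and> first_occ \<delta> qi q < enat b)"
  shows "b \<le> 2 * a"
proof (rule ccontr)
  assume nb: "\<not> b \<le> 2 * a"
  let ?f = "first_occ \<delta> qi"
  have pp: "pop_protocol Q Q0 Q1 qi \<delta>" using assms(2) unfolding aware1_computes_def by blast
  have qiQ: "qi \<in> Q" and dQ: "\<And>p q. p \<in> Q \<Longrightarrow> q \<in> Q \<Longrightarrow> \<delta> p q \<subseteq> Q \<times> Q"
    using pp unfolding pop_protocol_def by auto
  obtain qa where qa: "qa \<in> Q" "?f qa = enat a" using assms(3) by auto
  have a1: "a \<ge> 1" using fo_ge1[OF qa(2)] .
  obtain qb where qb: "qb \<in> Q" "?f qb = enat b" using assms(4) by auto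
  have noG: "\<And>s. s \<in> Q \<Longrightarrow> ?f s \<le> enat (2*a) \<Longrightarrow> ?f s \<le> enat a"
  proof -
    fix s assume s: "s \<in> Q" "?f s \<le> enat (2*a)"
    have "?f s < enat b" using s(2) nb by (meson enat_ord_simps(2) le_less_trans not_le)
    then show "?f s \<le> enat a" using assms(6) s(1) by (meson not_le)
  qed
  have qi_le: "?f qi \<le> enat a"
  proof -
    have "can_occur \<delta> qi 1 qi" unfolding can_occur_def pp_reach_def
      by (rule exI[of _ "init_config qi"]) (auto simp: init_config_def)
    then have "?f qi \<le> enat 1" by (rule fo_le) simp
    then show ?thesis using a1 by (meson enat_ord_simps(1) order_trans)
  qed
  have inv: "(\<forall>k. D k \<in> Q) \<and> (\<forall>k\<in>{1..b}. ?f (D k) \<le> enat a)"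
    if "pp_reach \<delta> b (init_config qi) D" for D
    using that unfolding pp_reach_def
  proof (induction rule: rtranclp_induct)
    case base
    then show ?case using qiQ qi_le by (simp add: init_config_def)
  next
    case (step C D)
    obtain i j where ij: "i \<in> {1..b}" "j \<in> {1..b}" "i \<noteq> j" "(D i, D j) \<in> \<delta> (C i) (C j)"
      "\<forall>k. k \<noteq> i \<and> k \<noteq> j \<longrightarrow> D k = C k" using step(2) unfolding pp_step_def by blast
    have CQ: "C i \<in> Q" "C j \<in> Q" using step(3) by auto
    have DQ: "D i \<in> Q" "D j \<in> Q" using dQ[OF CQ] ij(4) by auto
    have fi: "?f (C i) \<le> enat a" using step(3) ij(1) by blast
    have fj: "?f (C j) \<le> enat a" using step(3) ij(2) by blast
    obtain n1 where n1: "1 \<le> n1" "n1 \<le> a" "can_occur \<delta> qi n1 (C i)"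
      using fo_fin[OF fi] by blast
    obtain n2 where n2: "1 \<le> n2" "n2 \<le> a" "can_occur \<delta> qi n2 (C j)"
      using fo_fin[OF fj] by blast
    have co: "can_occur \<delta> qi (n1+n2) (D i) \<and> can_occur \<delta> qi (n1+n2) (D j)"
      using combine[OF n1(3) n2(3) ij(4)] .
    have n12: "n1 + n2 \<ge> 1" using n1 by simp
    have e1: "?f (D i) \<le> enat (n1+n2)" using fo_le[OF conjunct1[OF co] n12] .
    have e2: "?f (D j) \<le> enat (n1+n2)" using fo_le[OF conjunct2[OF co] n12] .
    have e3: "enat (n1+n2) \<le> enat (2*a)" using n1 n2 by simp
    have g1: "?f (D i) \<le> enat a" using noG[OF DQ(1) order_trans[OF e1 e3]] .
    have g2: "?f (D j) \<le> enat a" using noG[OF DQ(2) order_trans[OF e2 e3]] .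
    show ?case
    proof (intro conjI allI ballI)
      fix k
      show "D k \<in> Q" using step(3) ij(5) DQ by (cases "k = i \<or> k = j") auto
    next
      fix k assume "k \<in> {1..b}"
      then show "?f (D k) \<le> enat a" using step(3) ij(5) g1 g2 by (cases "k = i \<or> k = j") auto
    qed
  qed
  have "can_occur \<delta> qi b qb"
  proof -
    have ex: "\<exists>n\<ge>1. can_occur \<delta> qi n qb"
      using qb(2) unfolding first_occ_def by (auto split: if_splits)
    let ?L = "LEAST n. n \<ge> 1 \<and> can_occur \<delta> qi n qb"
    have "can_occur \<delta> qi ?L qb" using ex by (metis (mono_tags, lifting) LeastI)
    moreover have "?L = b" using qb(2) ex unfolding first_occ_def by auto
    ultimately show ?thesis by simp
  qed
  then obtain D k where "pp_reach \<delta> b (init_config qi) D" "k \<in> {1..b}" "D k = qb"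
    unfolding can_occur_def by blast
  then have "?f qb \<le> enat a" using inv by blast
  then show False using qb(2) assms(5) by simp
qed

end
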